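(* Let $v_1,\dots,v_n\in\mathbb{R}^d$ and let $b\ge d+1$ be an integer. Let $x\in[0,1]^n$ with $\sum_{i=1}^n x(i)=b$ and $X=\sum_{i=1}^n x(i)v_iv_i^\top$. Let $S\subseteq[n]$ with $|S|=b$ be such that $Z=\sum_{i\in S}v_iv_i^\top$ is nonsingular, and let \[ Z'=Z-v_{i^*}v_{i^*}^\top+v_{j^*}v_{j^*}^\top,\quad (i^*,j^* )\in\arg\max_{i\in S,\,j\in[n]\setminus S}\det(Z-v_iv_i^\top+v_jv_j^\top). \] If $\det(Z)^{1/d}\le\frac{b-d-1}{b}\det(X)^{1/d}$, then $\det(Z')\ge\big(1+\frac{d}{4b^3}\big)\det(Z)$. *)

theory Defs
  imports "HOL-Analysis.Analysis"
begin

definition outer :: "real^'d \<Rightarrow> real^'d \<Rightarrow> real^'d^'d" where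
  "outer u w = (\<chi> i j. u $ i * w $ j)"

end

theory Submission
  imports Defs
begin

lemma outer_mv: "outer u w *v y = (w \<bullet> y) *\<^sub>R u"
  by (simp add: outer_def matrix_vector_mult_def vec_eq_iff inner_vec_def sum_distrib_left mult.commute mult.left_commute)

lemma outer_neg: "outer (-u) w = - outer u w"
  by (simp add: outer_def vec_eq_iff)

lemma outer_zero2: "outer u 0 = 0"
  by (simp add: outer_def vec_eq_iff)

lemma mat_outer: "M ** outer y c = outer (M *v y) c"
  by (simp add: outer_def matrix_matrix_mult_def matrix_vector_mult_def vec_eq_iff sum_distrib_right mult.assoc)

lemma outer_mat: "outer y c ** (N::real^'n^'n) = outer y (transpose N *v c)"
  by (simp add: outer_def matrix_matrix_mult_def matrix_vector_mult_def vec_eq_iff sum_distrib_left mult.assoc transpose_def mult.commute mult.left_commute)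

lemma matrix_add_rdistrib: "((B + C) ** A) = (B ** A) + (C ** A)"
  by (vector matrix_matrix_mult_def sum.distrib[symmetric] field_simps)

lemma dot_mv_transpose: "x \<bullet> ((A::real^'n^'n) *v y) = (transpose A *v x) \<bullet> y"
  by (metis dot_lmul_matrix transpose_matrix_vector transpose_transpose)

lemma sum_mv: "(\<Sum>i\<in>S. f i) *v (y::real^'n) = (\<Sum>i\<in>S. f i *v y)"
  by (induction S rule: infinite_finite_induct) (auto simp: algebra_simps)

lemma quad_form:
  fixes v :: "nat \<Rightarrow> real^'n"
  shows "y \<bullet> ((\<Sum>i\<in>S. c i *\<^sub>R outer (v i) (v i)) *v y) = (\<Sum>i\<in>S. c i * (v i \<bullet> y)^2)"
  by (simp add: sum_mv scaleR_matrix_vector_assoc[symmetric] outer_mv inner_sum_right power2_eq_square inner_commute mult.assoc)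

lemma quad_form1:
  fixes v :: "nat \<Rightarrow> real^'n"
  shows "y \<bullet> ((\<Sum>i\<in>S. outer (v i) (v i)) *v y) = (\<Sum>i\<in>S. (v i \<bullet> y)^2)"
  by (simp add: sum_mv outer_mv inner_sum_right power2_eq_square inner_commute)

lemma transpose_sum: "transpose (\<Sum>i\<in>S. f i) = (\<Sum>i\<in>S. transpose (f i))"
  by (induction S rule: infinite_finite_induct) (auto simp: transpose_def vec_eq_iff)

lemma sym_Z:
  fixes v :: "nat \<Rightarrow> real^'n"
  shows "transpose (\<Sum>i\<in>S. c i *\<^sub>R outer (v i) (v i)) = (\<Sum>i\<in>S. c i *\<^sub>R outer (v i) (v i))"
  by (simp add: transpose_sum, rule sum.cong, auto simp: transpose_def outer_def vec_eq_iff mult.commute)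

lemma sym_Z1:
  fixes v :: "nat \<Rightarrow> real^'n"
  shows "transpose (\<Sum>i\<in>S. outer (v i) (v i)) = (\<Sum>i\<in>S. outer (v i) (v i))"
  by (simp add: transpose_sum, rule sum.cong, auto simp: transpose_def outer_def vec_eq_iff mult.commute)

lemma sym_dot: "transpose A = A \<Longrightarrow> x \<bullet> ((A::real^'n^'n) *v y) = y \<bullet> (A *v x)"
  by (metis dot_mv_transpose inner_commute)



lemma det_I_outer:
  fixes y c :: "real^'n"
  shows "det (mat 1 + outer y c) = 1 + c \<bullet> y"
proof (cases "c = 0")
  case True
  then show ?thesis by (simp add: outer_zero2)
next
  case False
  fix k :: 'n
  define a where "a = (1 / norm c) *\<^sub>R c"
  have na: "norm a = 1" using False by (simp add: a_def)
  obtain Q where oQ: "orthogonal_matrix Q" and Qk: "Q *v axis k 1 = a"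
    using orthogonal_matrix_exists_basis[OF na] by blast
  have QTQ: "transpose Q ** Q = mat 1" and QQT: "Q ** transpose Q = mat 1"
    using oQ unfolding orthogonal_matrix_def by auto
  have dQ: "det Q * det Q = 1"
    using det_orthogonal_matrix[OF oQ] by auto
  define y' where "y' = transpose Q *v y"
  have Qc: "transpose Q *v c = norm c *\<^sub>R axis k 1"
  proof -
    have "c = norm c *\<^sub>R a" using False by (simp add: a_def)
    then have "transpose Q *v c = norm c *\<^sub>R (transpose Q *v a)"
      using matrix_vector_mult_scaleR[of "transpose Q" "norm c" a] by metis
    also have "transpose Q *v a = axis k 1"
      using matrix_vector_mul_assoc[of "transpose Q" Q "axis k 1"] QTQ Qk by simp
    finally show ?thesis .
  qed
  have Qc': "c v* Q = norm c *\<^sub>R axis k 1" using Qc by simp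
  have eq: "transpose Q ** (mat 1 + outer y c) ** Q = mat 1 + outer y' (norm c *\<^sub>R axis k 1)"
    by (simp add: matrix_add_ldistrib matrix_add_rdistrib QTQ mat_outer outer_mat y'_def Qc' matrix_mul_assoc)
  define x where "x = axis k 1 + norm c *\<^sub>R y'"
  have eq2: "mat 1 + outer y' (norm c *\<^sub>R axis k 1) =
      (\<chi> i j. if j = k then ((mat 1::real^'n^'n) *v x)$i else (mat 1::real^'n^'n)$i$j)"
    unfolding matrix_vector_mul_lid by (auto simp: vec_eq_iff outer_def x_def mat_def axis_def)
  have "det (transpose Q ** (mat 1 + outer y c) ** Q) = det (mat 1 + outer y c)"
    using dQ by (simp add: det_mul)
  then have "det (mat 1 + outer y c) = x $ k"
    using eq eq2 cramer_lemma[of k "mat 1" x] by simp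
  also have "x $ k = 1 + norm c * y' $ k" by (simp add: x_def axis_def)
  also have "norm c * y' $ k = c \<bullet> y"
  proof -
    have "c \<bullet> y = c \<bullet> (Q *v y')"
      unfolding y'_def matrix_vector_mul_assoc QQT by simp
    also have "\<dots> = (transpose Q *v c) \<bullet> y'" by (rule dot_mv_transpose)
    also have "\<dots> = norm c * y' $ k" by (simp add: Qc' inner_axis inner_commute)
    finally show ?thesis by simp
  qed
  finally show ?thesis .
qed

lemma det_add_outer:
  fixes M :: "real^'n^'n"
  assumes "M *v y = a"
  shows "det (M + outer a c) = det M * (1 + c \<bullet> y)"
proof -
  have "M + outer a c = M ** (mat 1 + outer y c)"
    by (simp add: matrix_add_ldistrib mat_outer assms)
  then show ?thesis by (simp add: det_mul det_I_outer)
qed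

lemma rank_two_bound:
  fixes Z G :: "real^'n^'n"
  assumes ZG: "Z ** G = mat 1" and sG: "transpose G = G"
    and tu: "u \<bullet> (G *v u) < 1" and dZ: "det Z > 0"
  shows "det (Z - outer u u + outer w w) \<ge> det Z * (1 - u \<bullet> (G *v u)) * (1 + w \<bullet> (G *v w))"
proof -
  define tu where "tu = u \<bullet> (G *v u)"
  define A where "A = Z - outer u u"
  have ZGv: "\<And>z. Z *v (G *v z) = z"
    by (simp add: matrix_vector_mul_assoc ZG)
  have mvneg: "G *v (-u) = - (G *v u)"
    by (simp add: matrix_vector_mult_def vec_eq_iff sum_negf)
  have "Z *v (G *v (-u)) = -u" by (rule ZGv)
  then have "det (Z + outer (-u) u) = det Z * (1 + u \<bullet> (G *v (-u)))"
    by (rule det_add_outer)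
  then have dA: "det A = det Z * (1 - tu)"
    by (simp add: A_def outer_neg tu_def mvneg) 
  define c where "c = (u \<bullet> (G *v w)) / (1 - tu)"
  define y where "y = G *v w + c *\<^sub>R (G *v u)"
  have "A *v y = w"
  proof -
    have "A *v y = w + c *\<^sub>R u - (u \<bullet> y) *\<^sub>R u"
      by (simp add: A_def y_def algebra_simps ZGv outer_mv)
    also have "u \<bullet> y = u \<bullet> (G *v w) + c * tu"
      by (simp add: y_def inner_add_right tu_def)
    also have "c - (u \<bullet> (G *v w) + c * tu) = 0"
      using tu by (simp add: c_def tu_def field_simps)
    then have "w + c *\<^sub>R u - (u \<bullet> (G *v w) + c * tu) *\<^sub>R u = w"
      by (metis (no_types, lifting) add_diff_cancel_left' diff_add_cancel diff_eq_eq scaleR_left.diff scaleR_zero_left add.right_neutral)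
    finally show ?thesis .
  qed
  then have "det (A + outer w w) = det A * (1 + w \<bullet> y)" by (rule det_add_outer)
  also have "w \<bullet> y = w \<bullet> (G *v w) + (u \<bullet> (G *v w))^2 / (1 - tu)"
  proof -
    have "w \<bullet> (G *v u) = u \<bullet> (G *v w)" using sym_dot[OF sG] by simp
    then show ?thesis by (simp add: y_def inner_add_right c_def power2_eq_square)
  qed
  finally have e: "det (A + outer w w) = det Z * (1 - tu) * (1 + w \<bullet> (G *v w) + (u \<bullet> (G *v w))^2 / (1 - tu))"
    using dA by (simp add: algebra_simps)
  have p: "det Z * (1 - tu) > 0" using dZ tu by (simp add: tu_def)
  have "(u \<bullet> (G *v w))^2 / (1 - tu) \<ge> 0" using tu by (simp add: tu_def)
  then have "det Z * (1 - tu) * (1 + w \<bullet> (G *v w)) \<le> det Z * (1 - tu) * (1 + w \<bullet> (G *v w) + (u \<bullet> (G *v w))^2 / (1 - tu))"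
    using p by (intro mult_left_mono) auto
  then show ?thesis using e by (simp add: A_def tu_def)
qed



lemma DIMv: "DIM(real^'n) = CARD('n)" by simp

lemma quad_zero_lin:
  fixes a c :: real
  assumes "c \<ge> 0" "\<And>t. 2 * t * a + t^2 * c \<ge> 0"
  shows "a = 0"
proof -
  define t where "t = - a / (c + 1)"
  have c1: "c + 1 > 0" using assms(1) by simp
  have "(c+1)^2 * (2 * t * a + t^2 * c) = - (a^2 * (c+2))"
  proof -
    have tc: "t * (c + 1) = - a" using c1 by (simp add: t_def)
    have "(c+1)^2 * (2 * t * a + t^2 * c) = 2 * a * (t * (c+1)) * (c+1) + (t * (c+1))^2 * c"
      by algebra
    also have "\<dots> = - (a^2 * (c+2))" unfolding tc by algebra
    finally show ?thesis .
  qed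
  moreover have "(c+1)^2 * (2 * t * a + t^2 * c) \<ge> 0" using assms(2)[of t] by simp
  ultimately have "a^2 * (c+2) \<le> 0" by linarith
  moreover have "c + 2 > 0" using assms(1) by simp
  ultimately have "a^2 \<le> 0" by (simp add: mult_le_0_iff)
  then show ?thesis by simp
qed

lemma gen_eig_step:
  fixes Z X :: "real^'n^'n" and F :: "(real^'n) set"
  assumes sZ: "transpose Z = Z" and sX: "transpose X = X"
    and pd: "\<And>x. x \<noteq> 0 \<Longrightarrow> 0 < x \<bullet> (Z *v x)"
    and fin: "finite F" and cF: "card F < CARD('n)"
    and n1: "\<forall>f\<in>F. f \<bullet> (Z *v f) = 1"
    and orth: "\<forall>f\<in>F. \<forall>g\<in>F. f \<noteq> g \<longrightarrow> f \<bullet> (Z *v g) = 0"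
    and eig: "\<forall>f\<in>F. \<exists>m. X *v f = m *\<^sub>R (Z *v f)"
  obtains u where "u \<notin> F" "u \<bullet> (Z *v u) = 1" "\<forall>f\<in>F. u \<bullet> (Z *v f) = 0"
    "\<exists>m. X *v u = m *\<^sub>R (Z *v u)"
proof -
  define W where "W = {x. \<forall>f\<in>F. x \<bullet> (Z *v f) = 0}"
  have W0: "0 \<in> W" by (simp add: W_def)
  have Wadd: "x + y \<in> W" if "x \<in> W" "y \<in> W" for x y
    using that by (simp add: W_def inner_add_left)
  have Wsc: "c *\<^sub>R x \<in> W" if "x \<in> W" for x c
    using that by (simp add: W_def)
  have Wsub: "x - y \<in> W" if "x \<in> W" "y \<in> W" for x y
    using that by (simp add: W_def inner_diff_left)
  have clW: "closed W"
  proof -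
    have "W = (\<Inter>f\<in>F. {x. (Z *v f) \<bullet> x = 0})" by (auto simp: W_def inner_commute)
    then show ?thesis by (auto intro: closed_hyperplane)
  qed
  have "dim ((\<lambda>f. Z *v f) ` F) < DIM(real^'n)"
    using dim_le_card'[of "(\<lambda>f. Z *v f) ` F"] card_image_le[OF fin, of "(\<lambda>f. Z *v f)"] fin cF
    by simp
  then obtain x0 where x0: "x0 \<noteq> 0" "\<And>y. y \<in> span ((\<lambda>f. Z *v f) ` F) \<Longrightarrow> orthogonal x0 y"
    using orthogonal_to_subspace_exists by blast
  have x0W: "x0 \<in> W"
    using x0(2) by (auto simp: W_def orthogonal_def intro: span_base)
  define K where "K = sphere (0::real^'n) 1 \<inter> W"
  have cK: "compact K" unfolding K_def using clW by (intro compact_Int_closed) auto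
  have nK: "K \<noteq> {}"
  proof -
    have "(1 / norm x0) *\<^sub>R x0 \<in> K" using x0 x0W Wsc by (auto simp: K_def)
    then show ?thesis by blast
  qed
  define R where "R x = (x \<bullet> (X *v x)) / (x \<bullet> (Z *v x))" for x
  have contR: "continuous_on K R"
    unfolding R_def
    apply (intro continuous_intros)
    using pd by (auto simp: K_def) (metis less_irrefl norm_zero zero_neq_one)
  obtain u0 where u0K: "u0 \<in> K" and u0max: "\<And>y. y \<in> K \<Longrightarrow> R y \<le> R u0"
    using continuous_attains_sup[OF cK nK contR] by blast
  have u0W: "u0 \<in> W" and u0n: "u0 \<noteq> 0" using u0K by (auto simp: K_def)
  define lam where "lam = R u0"
  have su0: "u0 \<bullet> (Z *v u0) > 0" using pd u0n by blast
  have g0: "u0 \<bullet> (X *v u0) = lam * (u0 \<bullet> (Z *v u0))"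
    using su0 by (simp add: lam_def R_def)
  have gle: "x \<bullet> (X *v x) \<le> lam * (x \<bullet> (Z *v x))" if xW: "x \<in> W" for x
  proof (cases "x = 0")
    case True then show ?thesis by simp
  next
    case False
    define y where "y = (1 / norm x) *\<^sub>R x"
    have yK: "y \<in> K" using False xW Wsc by (auto simp: K_def y_def)
    have "R y = R x"
      using False by (simp add: R_def y_def matrix_vector_mult_scaleR power2_eq_square[symmetric])
    then have "R x \<le> lam" using u0max[OF yK] by (simp add: lam_def)
    moreover have "x \<bullet> (Z *v x) > 0" using pd False by blast
    ultimately show ?thesis by (simp add: R_def divide_le_eq)
  qed
  define r where "r = lam *\<^sub>R (Z *v u0) - X *v u0"
  define g where "g x = lam * (x \<bullet> (Z *v x)) - x \<bullet> (X *v x)" for x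
  have gnn: "g x \<ge> 0" if "x \<in> W" for x using gle[OF that] by (simp add: g_def)
  have rW: "w \<bullet> r = 0" if wW: "w \<in> W" for w
  proof (rule quad_zero_lin)
    show "g w \<ge> 0" by (rule gnn[OF wW])
    fix t :: real
    have "g (u0 + t *\<^sub>R w) \<ge> 0" using u0W wW Wadd Wsc gnn by blast
    moreover have "g (u0 + t *\<^sub>R w) = g u0 + 2 * t * (w \<bullet> r) + t^2 * g w"
    proof -
      have a: "u0 \<bullet> (Z *v w) = w \<bullet> (Z *v u0)" by (rule sym_dot[OF sZ])
      have b: "u0 \<bullet> (X *v w) = w \<bullet> (X *v u0)" by (rule sym_dot[OF sX])
      show ?thesis
        by (simp add: g_def r_def algebra_simps inner_add_left inner_add_right inner_diff_right a b power2_eq_square)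
    qed
    moreover have "g u0 = 0" using g0 by (simp add: g_def)
    ultimately show "2 * t * (w \<bullet> r) + t^2 * g w \<ge> 0" by simp
  qed
  have rF: "r \<bullet> f = 0" if fF: "f \<in> F" for f
  proof -
    obtain m where m: "X *v f = m *\<^sub>R (Z *v f)" using eig fF by blast
    have "f \<bullet> (Z *v u0) = u0 \<bullet> (Z *v f)" by (rule sym_dot[OF sZ])
    also have "\<dots> = 0" using u0W fF by (simp add: W_def)
    finally have a: "f \<bullet> (Z *v u0) = 0" .
    have "f \<bullet> (X *v u0) = u0 \<bullet> (X *v f)" by (rule sym_dot[OF sX])
    also have "\<dots> = m * (u0 \<bullet> (Z *v f))" by (simp add: m)
    also have "\<dots> = 0" using u0W fF by (simp add: W_def)
    finally have b: "f \<bullet> (X *v u0) = 0" .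
    show ?thesis using a b by (simp add: r_def inner_diff_right inner_commute)
  qed
  define x where "x = r - (\<Sum>f\<in>F. (f \<bullet> (Z *v r)) *\<^sub>R f)"
  have xW: "x \<in> W"
  proof -
    have "x \<bullet> (Z *v g) = 0" if gF: "g \<in> F" for g
    proof -
      have "(\<Sum>f\<in>F. (f \<bullet> (Z *v r)) * (f \<bullet> (Z *v g))) = (\<Sum>f\<in>F. if f = g then g \<bullet> (Z *v r) else 0)"
        using n1 orth gF by (intro sum.cong) auto
      also have "\<dots> = g \<bullet> (Z *v r)" using fin gF by simp
      also have "\<dots> = r \<bullet> (Z *v g)" by (rule sym_dot[OF sZ])
      finally show ?thesis
        by (simp add: x_def inner_diff_left inner_sum_left)
    qed
    then show ?thesis by (simp add: W_def)
  qed
  have "r \<bullet> x = r \<bullet> r"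
  proof -
    have "(\<Sum>f\<in>F. (f \<bullet> (Z *v r)) * (r \<bullet> f)) = 0" using rF by simp
    then show ?thesis by (simp add: x_def inner_diff_right inner_sum_right)
  qed
  moreover have "r \<bullet> x = 0" using rW[OF xW] by (simp add: inner_commute)
  ultimately have r0: "r = 0" by simp
  then have eigu0: "X *v u0 = lam *\<^sub>R (Z *v u0)" by (simp add: r_def)
  define s where "s = u0 \<bullet> (Z *v u0)"
  define u where "u = (1 / sqrt s) *\<^sub>R u0"
  have spos: "s > 0" using su0 by (simp add: s_def)
  have un: "u \<bullet> (Z *v u) = 1"
    using spos by (simp add: u_def matrix_vector_mult_scaleR s_def[symmetric])
  have uW: "u \<in> W" using u0W Wsc by (simp add: u_def)
  then have uo: "\<forall>f\<in>F. u \<bullet> (Z *v f) = 0" by (simp add: W_def)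
  have ue: "X *v u = lam *\<^sub>R (Z *v u)"
    by (simp add: u_def matrix_vector_mult_scaleR eigu0)
  have "u \<notin> F" using uo un by auto
  then show ?thesis using that un uo ue by blast
qed



lemma gen_eig:
  fixes Z X :: "real^'n^'n"
  assumes sZ: "transpose Z = Z" and sX: "transpose X = X"
    and pd: "\<And>x. x \<noteq> 0 \<Longrightarrow> 0 < x \<bullet> (Z *v x)"
  obtains e :: "'n \<Rightarrow> real^'n" and mu :: "'n \<Rightarrow> real"
  where "\<And>k l. e k \<bullet> (Z *v e l) = (if k = l then 1 else 0)" "\<And>k. X *v e k = mu k *\<^sub>R (Z *v e k)"
proof -
  define P where "P F \<longleftrightarrow> finite F \<and> (\<forall>f\<in>F. f \<bullet> (Z *v f) = 1)
    \<and> (\<forall>f\<in>F. \<forall>g\<in>F. f \<noteq> g \<longrightarrow> f \<bullet> (Z *v g) = 0)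
    \<and> (\<forall>f\<in>F. \<exists>m. X *v f = m *\<^sub>R (Z *v f))" for F :: "(real^'n) set"
  have "\<exists>F. P F \<and> card F = k" if "k \<le> CARD('n)" for k
    using that
  proof (induction k)
    case 0
    show ?case by (rule exI[of _ "{}"]) (simp add: P_def)
  next
    case (Suc k)
    then obtain F where PF: "P F" and cF: "card F = k" by auto
    then have fin: "finite F" by (simp add: P_def)
    have "card F < CARD('n)" using Suc.prems cF by simp
    then obtain u where u: "u \<notin> F" "u \<bullet> (Z *v u) = 1" "\<forall>f\<in>F. u \<bullet> (Z *v f) = 0"
      "\<exists>m. X *v u = m *\<^sub>R (Z *v u)"
    proof -
      have "card F < CARD('n)" using Suc.prems cF by simp
      moreover have "\<forall>f\<in>F. f \<bullet> (Z *v f) = 1" "\<forall>f\<in>F. \<forall>g\<in>F. f \<noteq> g \<longrightarrow> f \<bullet> (Z *v g) = 0"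
        "\<forall>f\<in>F. \<exists>m. X *v f = m *\<^sub>R (Z *v f)" using PF unfolding P_def by auto
      ultimately show ?thesis using gen_eig_step[OF sZ sX pd fin] that by blast
    qed
    have "P (insert u F)"
    proof -
      have fu: "f \<bullet> (Z *v u) = 0" if "f \<in> F" for f
        using u(3) that sym_dot[OF sZ, of f u] by simp
      have a: "finite (insert u F)" using fin by simp
      have b: "\<forall>f\<in>insert u F. f \<bullet> (Z *v f) = 1" using PF u(2) unfolding P_def by simp
      have c: "\<forall>f\<in>insert u F. \<forall>g\<in>insert u F. f \<noteq> g \<longrightarrow> f \<bullet> (Z *v g) = 0"
      proof (intro ballI impI)
        fix f g assume "f \<in> insert u F" "g \<in> insert u F" "f \<noteq> g"
        then consider "f = u" "g \<in> F" | "g = u" "f \<in> F" | "f \<in> F" "g \<in> F" by auto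
        then show "f \<bullet> (Z *v g) = 0"
        proof cases
          case 1 then show ?thesis using u(3) by simp
        next
          case 2 then show ?thesis using fu by simp
        next
          case 3 then show ?thesis using PF \<open>f \<noteq> g\<close> unfolding P_def by simp
        qed
      qed
      have d: "\<forall>f\<in>insert u F. \<exists>m. X *v f = m *\<^sub>R (Z *v f)" using PF u(4) unfolding P_def by simp
      show ?thesis using a b c d unfolding P_def by blast
    qed
    moreover have "card (insert u F) = Suc k" using fin u(1) cF by simp
    ultimately show ?case by blast
  qed
  then obtain F where PF: "P F" and cF: "card F = CARD('n)" by blast
  then have fin: "finite F" by (simp add: P_def)
  obtain e where be: "bij_betw e (UNIV::'n set) F"
    using finite_same_card_bij[OF finite fin] cF by auto
  have eF: "e k \<in> F" for k using be by (auto simp: bij_betw_def)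
  have einj: "e k \<noteq> e l" if "k \<noteq> l" for k l
    using be that by (auto simp: bij_betw_def inj_on_def)
  define mu where "mu k = (SOME m. X *v e k = m *\<^sub>R (Z *v e k))" for k
  have 1: "e k \<bullet> (Z *v e l) = (if k = l then 1 else 0)" for k l
    using PF eF einj unfolding P_def by auto
  have 2: "X *v e k = mu k *\<^sub>R (Z *v e k)" for k
  proof -
    have "\<exists>m. X *v e k = m *\<^sub>R (Z *v e k)" using PF eF unfolding P_def by auto
    then show ?thesis unfolding mu_def by (rule someI_ex)
  qed
  show ?thesis by (rule that[OF 1 2])
qed



lemma UtMU:
  fixes e :: "'n \<Rightarrow> real^'n" and M :: "real^'n^'n"
  shows "(transpose (\<chi> i k. e k $ i) ** M ** (\<chi> i k. e k $ i)) $ k $ l = e k \<bullet> (M *v e l)"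
proof -
  have "(transpose (\<chi> i k. e k $ i) ** M ** (\<chi> i k. e k $ i)) $ k $ l
      = (\<Sum>j\<in>UNIV. (\<Sum>i\<in>UNIV. e k $ i * M $ i $ j) * e l $ j)"
    by (simp add: matrix_matrix_mult_def transpose_def)
  also have "\<dots> = (\<Sum>i\<in>UNIV. e k $ i * (\<Sum>j\<in>UNIV. M $ i $ j * e l $ j))"
    by (simp add: sum_distrib_left sum_distrib_right mult.assoc) (rule sum.swap)
  also have "\<dots> = e k \<bullet> (M *v e l)"
    by (simp add: inner_vec_def matrix_vector_mult_def)
  finally show ?thesis .
qed

lemma tauform:
  fixes e :: "'n \<Rightarrow> real^'n"
  shows "y \<bullet> (((\<chi> i k. e k $ i) ** transpose (\<chi> i k. e k $ i)) *v y) = (\<Sum>k\<in>UNIV. (e k \<bullet> y)^2)"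
proof -
  define U where "U = (\<chi> i k. e k $ i)"
  have "y \<bullet> ((U ** transpose U) *v y) = y \<bullet> (U *v (transpose U *v y))"
    by (simp only: matrix_vector_mul_assoc)
  also have "\<dots> = (transpose U *v y) \<bullet> (transpose U *v y)" by (rule dot_mv_transpose)
  also have "\<dots> = (\<Sum>k\<in>UNIV. ((transpose U *v y) $ k)^2)"
    by (simp only: inner_vec_def power2_eq_square inner_real_def)
  also have "\<dots> = (\<Sum>k\<in>UNIV. (e k \<bullet> y)^2)"
    by (simp add: U_def matrix_vector_mult_def transpose_def inner_vec_def)
  finally show ?thesis by (simp add: U_def)
qed

lemma final_arith:
  fixes D B T m M w :: real
  assumes D1: "D \<ge> 1" and BD: "B - D - 1 > 0" and hT: "D * B \<le> (B - D - 1) * T"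
    and m0: "0 \<le> m" and mB: "B * m \<le> D" and w0: "w \<ge> 0" and wB: "w \<le> B"
    and hw: "w * (M - m) \<ge> T - D"
  shows "(1 - m) * (1 + M) \<ge> 1 + D / (4 * B^3)"
proof -
  have Bpos: "B > 0" using BD D1 by linarith
  have TD: "(B - D - 1) * (T - D) \<ge> D * (D + 1)"
    using hT by (simp add: algebra_simps)
  have TDp: "T - D > 0"
  proof (rule ccontr)
    assume "\<not> T - D > 0"
    then have "(B - D - 1) * (T - D) \<le> 0" using BD by (simp add: mult_nonneg_nonpos)
    then show False using TD D1 by (smt (verit) mult_pos_pos)
  qed
  define dl where "dl = M - m"
  have wpos: "w > 0"
  proof (rule ccontr)
    assume "\<not> w > 0" then have "w = 0" using w0 by simp
    then show False using hw TDp by simp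
  qed
  have dlpos: "dl > 0"
  proof (rule ccontr)
    assume "\<not> dl > 0"
    then have "w * dl \<le> 0" using wpos by (simp add: mult_nonneg_nonpos)
    then show False using hw TDp by (simp add: dl_def)
  qed
  have s0: "B * dl \<ge> T - D"
  proof -
    have "w * dl \<le> B * dl" using wB dlpos by (simp add: mult_right_mono)
    then show ?thesis using hw by (simp add: dl_def)
  qed
  have s1: "dl * B * (B - D - 1) \<ge> D * (D + 1)"
  proof -
    have "(B - D - 1) * (T - D) \<le> (B - D - 1) * (B * dl)" using s0 BD by (simp add: mult_left_mono)
    then show ?thesis using TD by (simp add: algebra_simps)
  qed
  have s2: "dl * B * (B - D) \<ge> D * (D + 1)"
  proof -
    have "dl * B * (B - D - 1) \<le> dl * B * (B - D)" using dlpos Bpos by simp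
    then show ?thesis using s1 by linarith
  qed
  have m1: "B * (1 - m) \<ge> B - D" using mB by (simp add: algebra_simps)
  have s3: "dl * (1 - m) * B^2 \<ge> D * (D + 1)"
  proof -
    have "dl * B * (B - D) \<le> dl * B * (B * (1 - m))"
      using m1 dlpos Bpos by (intro mult_left_mono) auto
    then show ?thesis using s2 by (simp add: power2_eq_square algebra_simps)
  qed
  have s4: "m^2 * B^2 \<le> D^2"
  proof -
    have "(B * m)^2 \<le> D^2" using mB m0 Bpos by (intro power_mono) auto
    then show ?thesis by (simp add: power_mult_distrib mult.commute)
  qed
  have s5: "(dl * (1 - m) - m^2) * B^2 \<ge> D"
    using s3 s4 by (simp add: algebra_simps power2_eq_square)
  have eq: "(1 - m) * (1 + M) = 1 + (dl * (1 - m) - m^2)"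
    by (simp add: dl_def algebra_simps power2_eq_square)
  have s6: "dl * (1 - m) - m^2 \<ge> D / B^2"
    using s5 Bpos by (simp add: divide_le_eq mult.commute)
  have s7: "D / (4 * B^3) \<le> D / B^2"
  proof -
    have "B^2 \<le> 4 * B^3"
    proof -
      have "B \<ge> 1" using BD D1 by linarith
      then have "B^2 * 1 \<le> B^2 * (4 * B)" by (intro mult_left_mono) auto
      then show ?thesis by (simp add: power2_eq_square power3_eq_cube algebra_simps)
    qed
    then show ?thesis using D1 Bpos by (intro divide_left_mono) auto
  qed
  show ?thesis using eq s6 s7 by linarith
qed



theorem proposition3p4:
  fixes v :: "nat \<Rightarrow> real^'d" and n b :: nat and x :: "nat \<Rightarrow> real"
    and S :: "nat set" and istar jstar :: nat
  assumes hb: "b \<ge> CARD('d) + 1"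
    and hx: "\<forall>i<n. 0 \<le> x i \<and> x i \<le> 1"
    and hxsum: "(\<Sum>i<n. x i) = real b"
    and hS: "S \<subseteq> {..<n}" and hcard: "card S = b"
    and hZ: "det (\<Sum>i\<in>S. outer (v i) (v i)) \<noteq> 0"
    and hi: "istar \<in> S" and hj: "jstar \<in> {..<n} - S"
    and hmax: "\<forall>i\<in>S. \<forall>j\<in>{..<n} - S.
       det ((\<Sum>k\<in>S. outer (v k) (v k)) - outer (v i) (v i) + outer (v j) (v j))
       \<le> det ((\<Sum>k\<in>S. outer (v k) (v k)) - outer (v istar) (v istar) + outer (v jstar) (v jstar))"
    and hcond: "root CARD('d) (det (\<Sum>i\<in>S. outer (v i) (v i)))
       \<le> (real b - real CARD('d) - 1) / real b
         * root CARD('d) (det (\<Sum>i<n. x i *\<^sub>R outer (v i) (v i)))"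
  shows "det ((\<Sum>k\<in>S. outer (v k) (v k)) - outer (v istar) (v istar) + outer (v jstar) (v jstar))
         \<ge> (1 + real CARD('d) / (4 * real b ^ 3)) * det (\<Sum>i\<in>S. outer (v i) (v i))"
proof -
  define Z where "Z = (\<Sum>i\<in>S. outer (v i) (v i))"
  define X where "X = (\<Sum>i<n. x i *\<^sub>R outer (v i) (v i))"
  define d where "d = CARD('d)"
  have d1: "d \<ge> 1" by (simp add: d_def Suc_le_eq)
  have fS: "finite S" using hS finite_subset by blast
  have sZ: "transpose Z = Z" unfolding Z_def by (rule sym_Z1)
  have sX: "transpose X = X" unfolding X_def by (rule sym_Z)
  have qZ: "y \<bullet> (Z *v y) = (\<Sum>i\<in>S. (v i \<bullet> y)^2)" for y unfolding Z_def by (rule quad_form1)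
  have qX: "y \<bullet> (X *v y) = (\<Sum>i<n. x i * (v i \<bullet> y)^2)" for y unfolding X_def by (rule quad_form)
  have pd: "0 < y \<bullet> (Z *v y)" if y0: "y \<noteq> 0" for y
  proof (rule ccontr)
    assume "\<not> 0 < y \<bullet> (Z *v y)"
    then have "(\<Sum>i\<in>S. (v i \<bullet> y)^2) \<le> 0" by (simp add: qZ)
    then have all0: "\<forall>i\<in>S. (v i \<bullet> y)^2 = 0"
    proof -
      have "(\<Sum>i\<in>S. (v i \<bullet> y)^2) = 0"
        using \<open>(\<Sum>i\<in>S. (v i \<bullet> y)^2) \<le> 0\<close> by (simp add: order_antisym sum_nonneg)
      then show ?thesis using fS sum_nonneg_eq_0_iff[of S "\<lambda>i. (v i \<bullet> y)^2"] by simp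
    qed
    have "Z *v y = (\<Sum>i\<in>S. (v i \<bullet> y) *\<^sub>R v i)"
      by (simp add: Z_def sum_mv outer_mv)
    also have "\<dots> = 0" using all0 by simp
    finally have Zy: "Z *v y = 0" .
    have "invertible Z" using hZ by (simp add: Z_def invertible_det_nz)
    then obtain Zi where "Zi ** Z = mat 1" unfolding invertible_def by blast
    then have "y = Zi *v (Z *v y)" by (simp add: matrix_vector_mul_assoc)
    then show False using Zy y0 by simp
  qed
  obtain e :: "'d \<Rightarrow> real^'d" and mu where
    eZ: "\<And>k l. e k \<bullet> (Z *v e l) = (if k = l then 1 else 0)" and
    eX: "\<And>k. X *v e k = mu k *\<^sub>R (Z *v e k)"
    using gen_eig[OF sZ sX pd] by metis
  define U where "U = (\<chi> i k. e k $ i)"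
  have UZU: "transpose U ** Z ** U = mat 1"
    by (simp add: vec_eq_iff U_def UtMU eZ mat_def)
  have UXU: "(transpose U ** X ** U) $ k $ l = (if k = l then mu k else 0)" for k l
    by (simp add: U_def UtMU eX eZ)
  have detU: "det Z * (det U)^2 = 1"
    using arg_cong[OF UZU, of det] by (simp add: det_mul power2_eq_square mult_ac)
  have dZpos: "det Z > 0"
  proof -
    have "(det U)^2 \<ge> 0" by simp
    show ?thesis
    proof (rule ccontr)
      assume "\<not> det Z > 0"
      then have "det Z * (det U)^2 \<le> 0" using \<open>(det U)^2 \<ge> 0\<close> by (simp add: mult_nonpos_nonneg)
      then show False using detU by simp
    qed
  qed
  have "det (transpose U ** X ** U) = (\<Prod>k\<in>UNIV. mu k)"
    by (subst det_diagonal) (simp_all add: UXU)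
  then have detX: "det X * (det U)^2 = (\<Prod>k\<in>UNIV. mu k)"
    by (simp add: det_mul power2_eq_square mult_ac)
  have detXZ: "det X = det Z * (\<Prod>k\<in>UNIV. mu k)"
  proof -
    have "det X = det X * (det Z * (det U)^2)" using detU by simp
    also have "\<dots> = det Z * (det X * (det U)^2)" by (simp add: algebra_simps)
    finally show ?thesis using detX by simp
  qed
  have mu_eq: "mu k = e k \<bullet> (X *v e k)" for k
    using eZ[of k k] by (simp add: eX)
  have mu0: "mu k \<ge> 0" for k
    unfolding mu_eq qX using hx by (intro sum_nonneg) auto
  define G where "G = U ** transpose U"
  have GZ: "G ** Z = mat 1"
  proof -
    have "(transpose U ** Z) ** U = mat 1" using UZU by (simp add: matrix_mul_assoc)
    then have "U ** (transpose U ** Z) = mat 1" using matrix_left_right_inverse by blast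
    then show ?thesis by (simp add: G_def matrix_mul_assoc)
  qed
  then have ZG: "Z ** G = mat 1" using matrix_left_right_inverse by blast
  have sG: "transpose G = G" by (simp add: G_def matrix_transpose_mul)
  define tau where "tau j = v j \<bullet> (G *v v j)" for j
  have tauf: "tau j = (\<Sum>k\<in>UNIV. (e k \<bullet> v j)^2)" for j
    unfolding tau_def G_def U_def by (rule tauform)
  have tau0: "tau j \<ge> 0" for j by (simp add: tauf sum_nonneg)
  have sumS: "(\<Sum>i\<in>S. tau i) = real d"
  proof -
    have "(\<Sum>i\<in>S. tau i) = (\<Sum>i\<in>S. \<Sum>k\<in>UNIV. (v i \<bullet> e k)^2)"
      unfolding tauf by (intro sum.cong refl) (simp only: inner_commute)
    also have "\<dots> = (\<Sum>k\<in>UNIV. \<Sum>i\<in>S. (v i \<bullet> e k)^2)" by (rule sum.swap)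
    also have "\<dots> = (\<Sum>k\<in>UNIV. e k \<bullet> (Z *v e k))" by (simp only: qZ)
    also have "\<dots> = (\<Sum>k\<in>(UNIV::'d set). 1)" by (simp only: eZ if_True simp_thms)
    finally show ?thesis by (simp add: d_def)
  qed
  define T where "T = (\<Sum>j<n. x j * tau j)"
  have Tmu: "T = (\<Sum>k\<in>UNIV. mu k)"
  proof -
    have "T = (\<Sum>j<n. \<Sum>k\<in>UNIV. x j * (v j \<bullet> e k)^2)"
      unfolding T_def tauf sum_distrib_left by (intro sum.cong refl) (simp only: inner_commute)
    also have "\<dots> = (\<Sum>k\<in>UNIV. \<Sum>j<n. x j * (v j \<bullet> e k)^2)" by (rule sum.swap)
    also have "\<dots> = (\<Sum>k\<in>UNIV. e k \<bullet> (X *v e k))" by (simp only: qX)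
    also have "\<dots> = (\<Sum>k\<in>UNIV. mu k)" by (simp only: mu_eq)
    finally show ?thesis .
  qed
  have tau1: "tau i \<le> 1" if iS: "i \<in> S" for i
  proof -
    define y where "y = G *v v i"
    have "y \<bullet> (Z *v y) = y \<bullet> v i"
      unfolding y_def matrix_vector_mul_assoc ZG by simp
    also have "\<dots> = tau i" by (simp add: y_def tau_def inner_commute)
    finally have a: "y \<bullet> (Z *v y) = tau i" .
    have "(v i \<bullet> y)^2 \<le> (\<Sum>l\<in>S. (v l \<bullet> y)^2)"
      using fS iS by (intro member_le_sum) auto
    then have b: "tau i * tau i \<le> tau i" using a qZ[of y] by (simp add: tau_def y_def power2_eq_square)
    show ?thesis
    proof (rule ccontr)
      assume "\<not> tau i \<le> 1"
      then have "tau i * 1 < tau i * tau i" using mult_strict_left_mono[of 1 "tau i" "tau i"] by simp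
      then show False using b by simp
    qed
  qed
  define P where "P = (\<Prod>k\<in>(UNIV::'d set). mu k)"
  define c where "c = (real b - real d - 1) / real b"
  have bpos: "real b > 0" using hb by simp
  have c0: "c \<ge> 0" using hb by (simp add: c_def d_def)
  have rZ: "root d (det Z) > 0" using dZpos d1 by (simp add: real_root_gt_zero)
  have hc: "root d (det Z) \<le> c * (root d (det Z) * root d P)"
    using hcond by (simp add: Z_def[symmetric] X_def[symmetric] d_def[symmetric] c_def detXZ real_root_mult P_def)
  then have "root d (det Z) * 1 \<le> root d (det Z) * (c * root d P)" by (simp add: algebra_simps)
  then have c1: "1 \<le> c * root d P" using rZ by (simp add: mult_le_cancel_left_pos)
  have P0: "P \<ge> 0" unfolding P_def using mu0 by (simp add: prod_nonneg)
  have Ppos: "P > 0"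
  proof (rule ccontr)
    assume "\<not> P > 0" then have "P = 0" using P0 by simp
    then show False using c1 by simp
  qed
  have rP: "root d P \<le> T / d"
  proof -
    have "(\<Sum>k\<in>(UNIV::'d set). mu k / card (UNIV::'d set)) \<ge> P powr (1 / card (UNIV::'d set))"
      unfolding P_def using mu0 by (intro arith_geom_mean) auto
    moreover have "(\<Sum>k\<in>(UNIV::'d set). mu k / card (UNIV::'d set)) = T / d"
      by (simp add: Tmu d_def sum_divide_distrib)
    moreover have "root d P = P powr (1 / d)" using d1 P0 by (simp add: root_powr_inverse)
    ultimately show ?thesis by (simp add: d_def)
  qed
  have cpos: "c > 0"
  proof (rule ccontr)
    assume "\<not> c > 0" then have "c = 0" using c0 by simp
    then show False using c1 by simp
  qed
  have "1 \<le> c * (T / d)" using c1 rP c0 by (meson mult_left_mono order_trans)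
  then have hT: "real d * real b \<le> (real b - real d - 1) * T"
    using bpos d1 by (simp add: c_def field_simps)
  have bd: "real b - real d - 1 > 0" using cpos bpos by (simp add: c_def zero_less_divide_iff)
  have Sne: "S \<noteq> {}" using hi by auto
  define m where "m = Min (tau ` S)"
  have "m \<in> tau ` S" using fS Sne unfolding m_def by (intro Min_in) auto
  then obtain i0 where i0S: "i0 \<in> S" and i0m: "tau i0 = m" by auto
  have mle: "m \<le> tau i" if "i \<in> S" for i using fS that by (simp add: m_def)
  define Oc where "Oc = {..<n} - S"
  have fO: "finite Oc" by (simp add: Oc_def)
  have One: "Oc \<noteq> {}" using hj by (auto simp: Oc_def)
  define M where "M = Max (tau ` Oc)"
  have "M \<in> tau ` Oc" using fO One unfolding M_def by (intro Max_in) auto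
  then obtain j0 where j0O: "j0 \<in> Oc" and j0M: "tau j0 = M" by auto
  have Mge: "tau j \<le> M" if "j \<in> Oc" for j using fO that by (simp add: M_def)
  have m0: "m \<ge> 0" using tau0 i0m by metis
  have mb: "real b * m \<le> real d"
  proof -
    have "real (card S) * m \<le> (\<Sum>i\<in>S. tau i)" using mle by (intro sum_bounded_below) auto
    then show ?thesis using sumS hcard by simp
  qed
  define w where "w = (\<Sum>j\<in>Oc. x j)"
  have splitx: "(\<Sum>j<n. f j) = (\<Sum>j\<in>Oc. f j) + (\<Sum>j\<in>S. f j)" for f :: "nat \<Rightarrow> real"
    unfolding Oc_def using hS by (intro sum.subset_diff) auto
  have xS: "\<And>i. i \<in> S \<Longrightarrow> 0 \<le> x i \<and> x i \<le> 1" using hx hS by auto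
  have xO: "\<And>i. i \<in> Oc \<Longrightarrow> 0 \<le> x i" using hx by (auto simp: Oc_def)
  have w_eq: "w = real b - (\<Sum>i\<in>S. x i)" using splitx[of x] hxsum by (simp add: w_def)
  have w0: "w \<ge> 0" unfolding w_def using xO by (intro sum_nonneg) auto
  have wb: "w \<le> real b" using w_eq xS by (simp add: sum_nonneg)
  have hw: "w * (M - m) \<ge> T - real d"
  proof -
    have a: "(\<Sum>j\<in>Oc. x j * tau j) \<le> w * M"
      unfolding w_def sum_distrib_right using xO Mge by (intro sum_mono mult_left_mono) auto
    have "(\<Sum>i\<in>S. x i * tau i) = (\<Sum>i\<in>S. tau i) - (\<Sum>i\<in>S. (1 - x i) * tau i)"
      by (simp add: algebra_simps sum_subtractf)
    moreover have "(\<Sum>i\<in>S. (1 - x i) * m) \<le> (\<Sum>i\<in>S. (1 - x i) * tau i)"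
      using xS mle by (intro sum_mono mult_left_mono) auto
    moreover have "(\<Sum>i\<in>S. (1 - x i) * m) = w * m"
      using hcard by (simp add: w_eq sum_distrib_right[symmetric] sum_subtractf)
    ultimately have b: "(\<Sum>i\<in>S. x i * tau i) \<le> real d - w * m" using sumS by linarith
    have "T = (\<Sum>j\<in>Oc. x j * tau j) + (\<Sum>i\<in>S. x i * tau i)" unfolding T_def by (rule splitx)
    then show ?thesis using a b by (simp add: algebra_simps)
  qed
  have key: "(1 - m) * (1 + M) \<ge> 1 + real d / (4 * real b ^ 3)"
    by (rule final_arith[OF _ bd _ m0 mb w0 wb hw]) (use d1 hT in auto)
  have mlt: "m < 1"
  proof -
    have "real d < real b" using hb by (simp add: d_def)
    then have "real b * m < real b * 1" using mb by linarith
    then show ?thesis using bpos mult_less_cancel_left_pos by blast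
  qed
  have "det (Z - outer (v i0) (v i0) + outer (v j0) (v j0))
      \<ge> det Z * (1 - tau i0) * (1 + tau j0)"
    unfolding tau_def by (rule rank_two_bound[OF ZG sG _ dZpos]) (use mlt i0m tau_def in auto)
  then have "det (Z - outer (v i0) (v i0) + outer (v j0) (v j0)) \<ge> det Z * ((1 - m) * (1 + M))"
    using i0m j0M by (simp add: mult.assoc)
  moreover have "det Z * ((1 - m) * (1 + M)) \<ge> det Z * (1 + real d / (4 * real b ^ 3))"
    using key dZpos by (simp add: mult_left_mono)
  moreover have "det (Z - outer (v i0) (v i0) + outer (v j0) (v j0))
      \<le> det (Z - outer (v istar) (v istar) + outer (v jstar) (v jstar))"
    using hmax i0S j0O by (simp add: Z_def Oc_def)
  ultimately show ?thesis by (simp add: Z_def d_def mult.commute)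
qed


end
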